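(* For all $M,M'\in\mathcal M$ and $h\in[H]$, $\frac1K\mathcal E_B(M,M',h)\le\mathcal W_F(M,M',h)$.
   Context: Factored MDP setting: $\mathcal O$ finite, $\mathcal X=[H]\times\mathcal O^d$ layered by time, $|\mathcal A|=K$; known parent sets $\mathrm{pa}_i\subseteq[d]$; transitions $P(x'|x,a)=\prod_{i=1}^dP^{(i)}[x'[i]\mid x[\mathrm{pa}_i],a,h]$; known reward $R^\star$ shared by all models, rewards in $[0,1]$ with total reward $\le1$; $\mathcal M$ is the set of all models with reward $R^\star$ and transitions factorizing with these parents, the true model $M^\star\in\mathcal M$. For a model $M$: $V_M,\pi_M$ its optimal value function and greedy optimal policy; $x_h\sim\pi$ the step-$h$ context when running $\pi$ in the true MDP; $(r,x')\sim M_h$ means $r\sim R^\star(x_h,a_h)$, $x'\sim P(x_h,a_h)$. $\mathcal E_B(M,M',h)=\mathbb E_{x_h\sim\pi_M,a_h\sim\pi_{M'}}[\mathbb E_{(r,x')\sim M'_h}[r+V_{M'}(x')]-\mathbb E_{(r,x')\sim M^\star_h}[r+V_{M'}(x')]]$. Test class $\mathcal F=\{g_1+\dots+g_d:g_i\in\mathcal G_i\}$, $\mathcal G_i$ all $\{-1,1\}$-valued functions of $(x,a,r,x')$ depending only on $(x[\mathrm{pa}_i],a,h,x'[i])$. $\mathcal W_F(M,M',h)=\max_{f\in\mathcal F}\mathbb E_{x_h\sim\pi_M,a_h\sim U(\mathcal A)}[\mathbb E_{M'_h}f(x_h,a_h,r,x')-\mathbb E_{M^\star_h}f(x_h,a_h,r,x')]$.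 *)

theory Defs
  imports "HOL-Probability.Probability" "HOL-Probability.Product_PMF"
begin

text \<open>Observations: finite type 'o; factor index: finite type 'd
 (so d = CARD('d)); actions: finite type 'a (K = CARD('a)).  A context at layer h is
 the pair (h, s) with s :: 'd => 'o; layers are 0-indexed h = 0, ..., H-1.
 A model is given by its factor kernels  M i h s a  (distribution of x'[i]);
 the reward distribution R h s a (a real pmf) is shared by all models.\<close>

type_synonym ('d, 'o, 'a) model = "'d \<Rightarrow> nat \<Rightarrow> ('d \<Rightarrow> 'o) \<Rightarrow> 'a \<Rightarrow> 'o pmf"

definition trans :: "('d::finite, 'o, 'a) model \<Rightarrow> nat \<Rightarrow> ('d \<Rightarrow> 'o) \<Rightarrow> 'a \<Rightarrow> ('d \<Rightarrow> 'o) pmf" where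
  "trans M h s a = Pi_pmf UNIV undefined (\<lambda>i. M i h s a)"

definition factored :: "('d \<Rightarrow> 'd set) \<Rightarrow> ('d, 'o, 'a) model \<Rightarrow> bool" where
  "factored pa M \<longleftrightarrow>
     (\<forall>i h s t a. restrict s (pa i) = restrict t (pa i) \<longrightarrow> M i h s a = M i h t a)"

fun Vrem :: "(nat \<Rightarrow> ('d::finite \<Rightarrow> 'o::finite) \<Rightarrow> 'a::finite \<Rightarrow> real pmf) \<Rightarrow> ('d, 'o, 'a) model
              \<Rightarrow> nat \<Rightarrow> nat \<Rightarrow> ('d \<Rightarrow> 'o) \<Rightarrow> real" where
  "Vrem R M 0 h s = 0"
| "Vrem R M (Suc k) h s =
     Max (range (\<lambda>a. measure_pmf.expectation (pair_pmf (R h s a) (trans M h s a))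
                       (\<lambda>(r, s'). r + Vrem R M k (Suc h) s')))"

definition Vopt :: "(nat \<Rightarrow> ('d::finite \<Rightarrow> 'o::finite) \<Rightarrow> 'a::finite \<Rightarrow> real pmf) \<Rightarrow> ('d, 'o, 'a) model
              \<Rightarrow> nat \<Rightarrow> nat \<Rightarrow> ('d \<Rightarrow> 'o) \<Rightarrow> real" where
  "Vopt R M H h s = Vrem R M (H - h) h s"

definition Qopt :: "(nat \<Rightarrow> ('d::finite \<Rightarrow> 'o::finite) \<Rightarrow> 'a::finite \<Rightarrow> real pmf) \<Rightarrow> ('d, 'o, 'a) model
              \<Rightarrow> nat \<Rightarrow> nat \<Rightarrow> ('d \<Rightarrow> 'o) \<Rightarrow> 'a \<Rightarrow> real" where
  "Qopt R M H h s a = measure_pmf.expectation (pair_pmf (R h s a) (trans M h s a))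
                        (\<lambda>(r, s'). r + Vopt R M H (Suc h) s')"

definition greedy :: "(nat \<Rightarrow> ('d::finite \<Rightarrow> 'o::finite) \<Rightarrow> 'a::finite \<Rightarrow> real pmf) \<Rightarrow> ('d, 'o, 'a) model
              \<Rightarrow> nat \<Rightarrow> (nat \<Rightarrow> ('d \<Rightarrow> 'o) \<Rightarrow> 'a) \<Rightarrow> bool" where
  "greedy R M H pol \<longleftrightarrow> (\<forall>h<H. \<forall>s. Qopt R M H h s (pol h s) = Vopt R M H h s)"

fun sdist :: "('d::finite \<Rightarrow> 'o) pmf \<Rightarrow> ('d, 'o, 'a) model \<Rightarrow> (nat \<Rightarrow> ('d \<Rightarrow> 'o) \<Rightarrow> 'a)
              \<Rightarrow> nat \<Rightarrow> ('d \<Rightarrow> 'o) pmf" where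
  "sdist s0 M pol 0 = s0"
| "sdist s0 M pol (Suc h) = bind_pmf (sdist s0 M pol h) (\<lambda>s. trans M h s (pol h s))"

definition EB :: "(nat \<Rightarrow> ('d::finite \<Rightarrow> 'o::finite) \<Rightarrow> 'a::finite \<Rightarrow> real pmf) \<Rightarrow> nat
              \<Rightarrow> ('d \<Rightarrow> 'o) pmf \<Rightarrow> ('d, 'o, 'a) model
              \<Rightarrow> (nat \<Rightarrow> ('d \<Rightarrow> 'o) \<Rightarrow> 'a) \<Rightarrow> ('d, 'o, 'a) model \<Rightarrow> (nat \<Rightarrow> ('d \<Rightarrow> 'o) \<Rightarrow> 'a)
              \<Rightarrow> nat \<Rightarrow> real" where
  "EB R H s0 Mstar piM M' piM' h =
     measure_pmf.expectation (sdist s0 Mstar piM h)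
       (\<lambda>s. let a = piM' h s in
             measure_pmf.expectation (pair_pmf (R h s a) (trans M' h s a))
               (\<lambda>(r, s'). r + Vopt R M' H (Suc h) s')
           - measure_pmf.expectation (pair_pmf (R h s a) (trans Mstar h s a))
               (\<lambda>(r, s'). r + Vopt R M' H (Suc h) s'))"

definition Gset :: "('d \<Rightarrow> 'd set) \<Rightarrow> 'd
      \<Rightarrow> (nat \<Rightarrow> ('d \<Rightarrow> 'o) \<Rightarrow> 'a \<Rightarrow> real \<Rightarrow> ('d \<Rightarrow> 'o) \<Rightarrow> real) set" where
  "Gset pa i = {g. (\<forall>h s a r s'. g h s a r s' \<in> {-1, 1}) \<and>
      (\<forall>h s t a r r' s' t'. restrict s (pa i) = restrict t (pa i) \<and> s' i = t' i
          \<longrightarrow> g h s a r s' = g h t a r' t')}"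

definition Fclass :: "('d::finite \<Rightarrow> 'd set)
      \<Rightarrow> (nat \<Rightarrow> ('d \<Rightarrow> 'o) \<Rightarrow> 'a \<Rightarrow> real \<Rightarrow> ('d \<Rightarrow> 'o) \<Rightarrow> real) set" where
  "Fclass pa = {f. \<exists>g. (\<forall>i. g i \<in> Gset pa i) \<and> f = (\<lambda>h s a r s'. \<Sum>i\<in>UNIV. g i h s a r s')}"

text \<open>Witnessed model misfit W_F(M, M', h) (the max is written as a supremum).\<close>
definition WF :: "(nat \<Rightarrow> ('d::finite \<Rightarrow> 'o::finite) \<Rightarrow> 'a::finite \<Rightarrow> real pmf) \<Rightarrow> ('d \<Rightarrow> 'd set)
              \<Rightarrow> ('d \<Rightarrow> 'o) pmf \<Rightarrow> ('d, 'o, 'a) model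
              \<Rightarrow> (nat \<Rightarrow> ('d \<Rightarrow> 'o) \<Rightarrow> 'a) \<Rightarrow> ('d, 'o, 'a) model \<Rightarrow> nat \<Rightarrow> real" where
  "WF R pa s0 Mstar piM M' h =
     (SUP f \<in> Fclass pa.
        measure_pmf.expectation (pair_pmf (sdist s0 Mstar piM h) (pmf_of_set UNIV))
          (\<lambda>(s, a). measure_pmf.expectation (pair_pmf (R h s a) (trans M' h s a))
                        (\<lambda>(r, s'). f h s a r s')
                    - measure_pmf.expectation (pair_pmf (R h s a) (trans Mstar h s a))
                        (\<lambda>(r, s'). f h s a r s')))"

end

theory Submission
  imports Defs
begin

definition L1 :: "'o::finite pmf \<Rightarrow> 'o pmf \<Rightarrow> real" where
  "L1 p q = (\<Sum>z\<in>UNIV. \<bar>pmf p z - pmf q z\<bar>)"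

lemma L1_nonneg: "0 \<le> L1 p q"
  unfolding L1_def by (intro sum_nonneg) auto

lemma expfin:
  fixes f :: "'x::finite \<Rightarrow> real"
  shows "measure_pmf.expectation p f = (\<Sum>x\<in>UNIV. pmf p x * f x)"
  by (subst integral_measure_pmf[of UNIV]) auto

lemma exp_mono_fin:
  fixes f g :: "'x::finite \<Rightarrow> real"
  assumes "\<And>x. f x \<le> g x"
  shows "measure_pmf.expectation p f \<le> measure_pmf.expectation p g"
  unfolding expfin by (intro sum_mono mult_left_mono) (auto simp: assms)

lemma int_bdd:
  fixes f :: "'x \<Rightarrow> real"
  assumes "\<And>x. x \<in> set_pmf p \<Longrightarrow> \<bar>f x\<bar> \<le> B"
  shows "integrable (measure_pmf p) f"
  by (rule measure_pmf.integrable_const_bound[where B=B]) (auto simp: AE_measure_pmf_iff assms)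

lemma exp_abs_gen:
  fixes f :: "'x \<Rightarrow> real"
  assumes "\<And>x. \<bar>f x\<bar> \<le> C"
  shows "\<bar>measure_pmf.expectation p f\<bar> \<le> C"
proof -
  have i: "integrable (measure_pmf p) f" by (rule int_bdd[of _ _ C]) (simp add: assms)
  have "measure_pmf.expectation p f \<le> C"
    using i by (rule measure_pmf.integral_le_const) (use assms in \<open>auto simp: AE_measure_pmf_iff abs_le_iff\<close>)
  moreover have "- C \<le> measure_pmf.expectation p f"
    using i by (rule measure_pmf.integral_ge_const) (smt (verit) AE_measure_pmf_iff assms)
  ultimately show ?thesis by linarith
qed

lemma exp_le_fin:
  fixes g :: "'x::finite \<Rightarrow> real"
  assumes "\<And>x. g x \<le> c"
  shows "measure_pmf.expectation p g \<le> c"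
proof -
  have "measure_pmf.expectation p g \<le> measure_pmf.expectation p (\<lambda>_. c)"
    by (rule exp_mono_fin) (simp add: assms)
  then show ?thesis by simp
qed

lemma diff_le_L1:
  fixes W :: "'o::finite \<Rightarrow> real"
  assumes "\<And>x. \<bar>W x\<bar> \<le> 1"
  shows "measure_pmf.expectation p W - measure_pmf.expectation q W \<le> L1 p q"
proof -
  have "measure_pmf.expectation p W - measure_pmf.expectation q W
        = (\<Sum>x\<in>UNIV. (pmf p x - pmf q x) * W x)"
    by (simp add: expfin sum_subtractf left_diff_distrib)
  also have "\<dots> \<le> L1 p q" unfolding L1_def
  proof (rule sum_mono)
    fix x
    have "(pmf p x - pmf q x) * W x \<le> \<bar>(pmf p x - pmf q x) * W x\<bar>" by simp
    also have "\<dots> = \<bar>pmf p x - pmf q x\<bar> * \<bar>W x\<bar>" by (simp add: abs_mult)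
    also have "\<dots> \<le> \<bar>pmf p x - pmf q x\<bar> * 1" by (intro mult_left_mono assms) auto
    finally show "(pmf p x - pmf q x) * W x \<le> \<bar>pmf p x - pmf q x\<bar>" by simp
  qed
  finally show ?thesis .
qed

lemma pair_fin:
  fixes P :: "'x::finite pmf" and Q :: "'y::finite pmf" and \<phi> :: "'x \<times> 'y \<Rightarrow> real"
  shows "measure_pmf.expectation (pair_pmf P Q) \<phi>
       = measure_pmf.expectation P (\<lambda>x. measure_pmf.expectation Q (\<lambda>y. \<phi> (x, y)))"
proof -
  have "measure_pmf.expectation (pair_pmf P Q) \<phi> = (\<Sum>z\<in>UNIV \<times> UNIV. pmf (pair_pmf P Q) z * \<phi> z)"
    by (simp add: expfin UNIV_Times_UNIV)
  also have "\<dots> = (\<Sum>x\<in>UNIV. \<Sum>y\<in>UNIV. pmf (pair_pmf P Q) (x,y) * \<phi> (x,y))"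
    by (subst sum.cartesian_product) (simp add: case_prod_unfold)
  also have "\<dots> = measure_pmf.expectation P (\<lambda>x. measure_pmf.expectation Q (\<lambda>y. \<phi> (x, y)))"
    by (simp add: expfin pmf_pair sum_distrib_left mult.assoc)
  finally show ?thesis .
qed

lemma pi_tv:
  fixes p q :: "'d::finite \<Rightarrow> 'o::finite pmf"
  assumes "finite A"
  shows "\<forall>V. (\<forall>f. \<bar>V f\<bar> \<le> 1) \<longrightarrow>
    measure_pmf.expectation (Pi_pmf A dflt p) V - measure_pmf.expectation (Pi_pmf A dflt q) V
      \<le> (\<Sum>i\<in>A. L1 (p i) (q i))"
  using assms
proof (induction A rule: finite_induct)
  case empty
  then show ?case by simp
next
  case (insert x A)
  show ?case
  proof (intro allI impI)
    fix V :: "('d \<Rightarrow> 'o) \<Rightarrow> real"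
    assume V: "\<forall>f. \<bar>V f\<bar> \<le> 1"
    define Wp where "Wp y = measure_pmf.expectation (Pi_pmf A dflt p) (\<lambda>f. V (f(x:=y)))" for y
    define Wq where "Wq y = measure_pmf.expectation (Pi_pmf A dflt q) (\<lambda>f. V (f(x:=y)))" for y
    have ep: "measure_pmf.expectation (Pi_pmf (insert x A) dflt p) V = measure_pmf.expectation (p x) Wp"
      unfolding Wp_def using insert(1,2) by (simp add: Pi_pmf_insert pair_fin case_prod_beta)
    have eq: "measure_pmf.expectation (Pi_pmf (insert x A) dflt q) V = measure_pmf.expectation (q x) Wq"
      unfolding Wq_def using insert(1,2) by (simp add: Pi_pmf_insert pair_fin case_prod_beta)
    have Wpb: "\<bar>Wp y\<bar> \<le> 1" for y unfolding Wp_def by (rule exp_abs_gen) (simp add: V)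
    have 1: "measure_pmf.expectation (p x) Wp - measure_pmf.expectation (q x) Wp \<le> L1 (p x) (q x)"
      by (rule diff_le_L1) (simp add: Wpb)
    have "measure_pmf.expectation (q x) Wp - measure_pmf.expectation (q x) Wq
        = measure_pmf.expectation (q x) (\<lambda>y. Wp y - Wq y)"
      by (simp add: expfin sum_subtractf right_diff_distrib)
    also have "\<dots> \<le> (\<Sum>i\<in>A. L1 (p i) (q i))"
    proof (rule exp_le_fin)
      fix y
      show "Wp y - Wq y \<le> (\<Sum>i\<in>A. L1 (p i) (q i))"
        unfolding Wp_def Wq_def using insert.IH V by simp
    qed
    finally have 2: "measure_pmf.expectation (q x) Wp - measure_pmf.expectation (q x) Wq
       \<le> (\<Sum>i\<in>A. L1 (p i) (q i))" .
    show "measure_pmf.expectation (Pi_pmf (insert x A) dflt p) V -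
          measure_pmf.expectation (Pi_pmf (insert x A) dflt q) V
          \<le> (\<Sum>i\<in>insert x A. L1 (p i) (q i))"
      using 1 2 insert(1,2) by (simp add: ep eq)
  qed
qed


lemma Vrem_nonneg:
  assumes RR: "\<forall>k s a. set_pmf (R k s a) \<subseteq> {0..1}"
  shows "0 \<le> Vrem R M k j s"
proof (induction k arbitrary: j s)
  case 0
  then show ?case by simp
next
  case (Suc k)
  let ?\<phi> = "\<lambda>a. measure_pmf.expectation (pair_pmf (R j s a) (trans M j s a))
                       (\<lambda>(r, s'). r + Vrem R M k (Suc j) s')"
  have "0 \<le> ?\<phi> undefined"
    using RR Suc.IH by (intro integral_nonneg_AE) (force simp: AE_measure_pmf_iff)
  also have "\<dots> \<le> Max (range ?\<phi>)" by (rule Max_ge) auto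
  finally show ?case by simp
qed

lemma Vrem_le:
  assumes RR: "\<forall>k s a. set_pmf (R k s a) \<subseteq> {0..1}"
  shows "\<forall>j s c. (\<forall>ss aa rr. (\<forall>l\<in>{j..<j+k}. rr l \<in> set_pmf (R l (ss l) (aa l)))
             \<longrightarrow> c + (\<Sum>l\<in>{j..<j+k}. rr l) \<le> 1) \<longrightarrow> c + Vrem R M k j s \<le> 1"
proof (induction k)
  case 0
  then show ?case by simp
next
  case (Suc k)
  show ?case
  proof (intro allI impI)
    fix j s c
    assume H: "\<forall>ss aa rr. (\<forall>l\<in>{j..<j+Suc k}. rr l \<in> set_pmf (R l (ss l) (aa l)))
             \<longrightarrow> c + (\<Sum>l\<in>{j..<j+Suc k}. rr l) \<le> 1"
    let ?\<phi> = "\<lambda>a. measure_pmf.expectation (pair_pmf (R j s a) (trans M j s a))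
                       (\<lambda>(r, s'). r + Vrem R M k (Suc j) s')"
    have "Max (range ?\<phi>) \<in> range ?\<phi>" by (rule Max_in) auto
    then obtain a where a: "Max (range ?\<phi>) = ?\<phi> a" by (metis (no_types, lifting) imageE)
    have pt: "c + r + Vrem R M k (Suc j) s' \<le> 1" if r: "r \<in> set_pmf (R j s a)" for r s'
    proof -
      have "\<forall>ss aa rr. (\<forall>l\<in>{Suc j..<Suc j+k}. rr l \<in> set_pmf (R l (ss l) (aa l)))
             \<longrightarrow> (c + r) + (\<Sum>l\<in>{Suc j..<Suc j+k}. rr l) \<le> 1"
      proof (intro allI impI)
        fix ss aa rr
        assume A: "\<forall>l\<in>{Suc j..<Suc j+k}. rr l \<in> set_pmf (R l (ss l) (aa l))"
        have "\<forall>l\<in>{j..<j+Suc k}. (rr(j:=r)) l \<in> set_pmf (R l ((ss(j:=s)) l) ((aa(j:=a)) l))"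
          using A r by auto
        then have "c + (\<Sum>l\<in>{j..<j+Suc k}. (rr(j:=r)) l) \<le> 1" using H by blast
        moreover have "(\<Sum>l\<in>{j..<j+Suc k}. (rr(j:=r)) l) = r + (\<Sum>l\<in>{Suc j..<Suc j+k}. rr l)"
          by (subst sum.atLeast_Suc_lessThan) (auto intro!: sum.cong)
        ultimately show "(c + r) + (\<Sum>l\<in>{Suc j..<Suc j+k}. rr l) \<le> 1" by simp
      qed
      then have "(c + r) + Vrem R M k (Suc j) s' \<le> 1" using Suc.IH by blast
      then show ?thesis by simp
    qed
    have "?\<phi> a \<le> 1 - c"
    proof (rule measure_pmf.integral_le_const)
      show "integrable (measure_pmf (pair_pmf (R j s a) (trans M j s a)))
              (\<lambda>(r, s'). r + Vrem R M k (Suc j) s')"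
      proof (rule int_bdd[where B="\<bar>1 - c\<bar>"])
        fix x assume x: "x \<in> set_pmf (pair_pmf (R j s a) (trans M j s a))"
        obtain r s' where xe: "x = (r, s')" by force
        have "r \<in> set_pmf (R j s a)" using x xe by auto
        then have "0 \<le> r" "c + r + Vrem R M k (Suc j) s' \<le> 1" using RR pt by force+
        moreover have "0 \<le> Vrem R M k (Suc j) s'" using Vrem_nonneg[OF RR] .
        ultimately show "\<bar>(case x of (r, s') \<Rightarrow> r + Vrem R M k (Suc j) s')\<bar> \<le> \<bar>1 - c\<bar>"
          using xe by auto
      qed
      show "AE x in measure_pmf (pair_pmf (R j s a) (trans M j s a)).
              (case x of (r, s') \<Rightarrow> r + Vrem R M k (Suc j) s') \<le> 1 - c"
        unfolding AE_measure_pmf_iff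
      proof
        fix x assume x: "x \<in> set_pmf (pair_pmf (R j s a) (trans M j s a))"
        obtain r s' where xe: "x = (r, s')" by force
        have "r \<in> set_pmf (R j s a)" using x xe by auto
        then have "c + r + Vrem R M k (Suc j) s' \<le> 1" by (rule pt)
        then show "(case x of (r, s') \<Rightarrow> r + Vrem R M k (Suc j) s') \<le> 1 - c"
          using xe by simp
      qed
    qed
    then show "c + Vrem R M (Suc k) j s \<le> 1" using a by simp
  qed
qed


lemma pair_rV:
  fixes Rp :: "real pmf" and P :: "'x::finite pmf" and W :: "'x \<Rightarrow> real"
  assumes "set_pmf Rp \<subseteq> {0..1}"
  shows "measure_pmf.expectation (pair_pmf Rp P) (\<lambda>(r, s'). r + W s')
       = measure_pmf.expectation Rp (\<lambda>r. r) + measure_pmf.expectation P W"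
proof -
  have e: "(\<lambda>(r, s'). r + W s') = (\<lambda>x. fst x + W (snd x))" by auto
  have "integrable (map_pmf fst (pair_pmf Rp P)) (\<lambda>r. r)"
    unfolding map_fst_pair_pmf by (rule int_bdd[where B=1]) (use assms in auto)
  then have i1: "integrable (pair_pmf Rp P) (\<lambda>x. fst x)" by simp
  have "integrable (map_pmf snd (pair_pmf Rp P)) W"
    unfolding map_snd_pair_pmf by (rule integrable_measure_pmf_finite) simp
  then have i2: "integrable (pair_pmf Rp P) (\<lambda>x. W (snd x))" by simp
  have "measure_pmf.expectation (pair_pmf Rp P) (\<lambda>x. fst x + W (snd x))
      = measure_pmf.expectation (pair_pmf Rp P) (\<lambda>x. fst x) + measure_pmf.expectation (pair_pmf Rp P) (\<lambda>x. W (snd x))"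
    by (rule Bochner_Integration.integral_add[OF i1 i2])
  also have "measure_pmf.expectation (pair_pmf Rp P) (\<lambda>x. fst x) = measure_pmf.expectation Rp (\<lambda>r. r)"
    by (rule expectation_pair_pmf_fst)
  finally show ?thesis unfolding e by simp
qed

lemma pi_comp_sum:
  fixes N :: "('d::finite, 'o::finite, 'a) model" and \<phi> :: "'d \<Rightarrow> 'o \<Rightarrow> real"
  shows "measure_pmf.expectation (trans N h s a) (\<lambda>s'. \<Sum>i\<in>UNIV. \<phi> i (s' i))
       = (\<Sum>i\<in>UNIV. measure_pmf.expectation (N i h s a) (\<phi> i))"
proof -
  have "measure_pmf.expectation (trans N h s a) (\<lambda>s'. \<Sum>i\<in>UNIV. \<phi> i (s' i))
      = (\<Sum>i\<in>UNIV. measure_pmf.expectation (trans N h s a) (\<lambda>s'. \<phi> i (s' i)))"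
    by (simp add: expfin sum_distrib_left) (rule sum.swap)
  also have "\<dots> = (\<Sum>i\<in>UNIV. measure_pmf.expectation (N i h s a) (\<phi> i))"
  proof (rule sum.cong[OF refl])
    fix i
    have "measure_pmf.expectation (trans N h s a) (\<lambda>s'. \<phi> i (s' i))
        = measure_pmf.expectation (map_pmf (\<lambda>s'. s' i) (trans N h s a)) (\<phi> i)" by simp
    also have "map_pmf (\<lambda>s'. s' i) (trans N h s a) = N i h s a"
      unfolding trans_def by (simp add: Pi_pmf_component)
    finally show "measure_pmf.expectation (trans N h s a) (\<lambda>s'. \<phi> i (s' i))
        = measure_pmf.expectation (N i h s a) (\<phi> i)" .
  qed
  finally show ?thesis .
qed

theorem mainTheorem11:
  fixes pa :: "'d::finite \<Rightarrow> 'd set"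
    and R :: "nat \<Rightarrow> ('d \<Rightarrow> 'o::finite) \<Rightarrow> 'a::finite \<Rightarrow> real pmf"
    and H :: nat
    and s0 :: "('d \<Rightarrow> 'o) pmf"
    and Mstar M M' :: "('d, 'o, 'a) model"
    and piM piM' :: "nat \<Rightarrow> ('d \<Rightarrow> 'o) \<Rightarrow> 'a"
    and h :: nat
  assumes reward_range: "\<forall>k s a. set_pmf (R k s a) \<subseteq> {0..1}"
    and total_reward: "\<forall>(ss :: nat \<Rightarrow> 'd \<Rightarrow> 'o) (aa :: nat \<Rightarrow> 'a) (rr :: nat \<Rightarrow> real).
           ss 0 \<in> set_pmf s0 \<and> (\<forall>k<H. rr k \<in> set_pmf (R k (ss k) (aa k)))
           \<longrightarrow> (\<Sum>k<H. rr k) \<le> 1"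
    and true_model: "factored pa Mstar"
    and M_in: "factored pa M"
    and M'_in: "factored pa M'"
    and piM_greedy: "greedy R M H piM"
    and piM'_greedy: "greedy R M' H piM'"
    and h_layer: "h < H"
  shows "EB R H s0 Mstar piM M' piM' h / real CARD('a) \<le> WF R pa s0 Mstar piM M' h"
proof -
  define d where "d = sdist s0 Mstar piM h"
  define V where "V = Vopt R M' H (Suc h)"
  define T where "T s a = (\<Sum>i\<in>UNIV. L1 (M' i h s a) (Mstar i h s a))" for s a
  define g :: "'d \<Rightarrow> nat \<Rightarrow> ('d \<Rightarrow> 'o) \<Rightarrow> 'a \<Rightarrow> real \<Rightarrow> ('d \<Rightarrow> 'o) \<Rightarrow> real" where
    "g i = (\<lambda>h0 s a r s'. if pmf (Mstar i h0 s a) (s' i) \<le> pmf (M' i h0 s a) (s' i) then 1 else -1)" for i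
  define f where "f = (\<lambda>h0 s a (r::real) s'. \<Sum>i\<in>UNIV. g i h0 s a r s')"
  have gG: "g i \<in> Gset pa i" for i
  proof -
    have eq: "g i h0 s a r s' = g i h0 t a r' t'"
      if "restrict s (pa i) = restrict t (pa i)" "s' i = t' i" for h0 s t a r r' s' t'
    proof -
      have "M' i h0 s a = M' i h0 t a" "Mstar i h0 s a = Mstar i h0 t a"
        using M'_in true_model that(1) unfolding factored_def by blast+
      then show ?thesis unfolding g_def using that(2) by simp
    qed
    show ?thesis unfolding Gset_def mem_Collect_eq
    proof (intro conjI allI impI)
      show "g i h0 s a r s' \<in> {- 1, 1}" for h0 s a r s' by (simp add: g_def)
      show "g i h0 s a r s' = g i h0 t a r' t'"
        if "restrict s (pa i) = restrict t (pa i) \<and> s' i = t' i" for h0 s t a r r' s' t'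
        using eq that by blast
    qed
  qed
  have fF: "f \<in> Fclass pa" unfolding Fclass_def f_def using gG by blast

  have Vb: "\<bar>V x\<bar> \<le> 1" for x
  proof -
    have n: "0 \<le> V x" unfolding V_def Vopt_def by (rule Vrem_nonneg[OF reward_range])
    have HH: "Suc h + (H - Suc h) = H" using h_layer by simp
    have P: "\<forall>ss aa rr. (\<forall>l\<in>{Suc h..<Suc h + (H - Suc h)}. rr l \<in> set_pmf (R l (ss l) (aa l)))
             \<longrightarrow> 0 + (\<Sum>l\<in>{Suc h..<Suc h + (H - Suc h)}. rr l) \<le> 1"
    proof (intro allI impI)
      fix ss aa rr
      assume A: "\<forall>l\<in>{Suc h..<Suc h + (H - Suc h)}. rr l \<in> set_pmf (R l (ss l) (aa l))"
      obtain s00 where s00: "s00 \<in> set_pmf s0" using set_pmf_not_empty by fast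
      define ss' where "ss' = ss(0:=s00)"
      define rr' where "rr' l = (if l \<le> h then (SOME x. x \<in> set_pmf (R l (ss' l) (aa l))) else rr l)" for l
      have inR: "rr' k \<in> set_pmf (R k (ss' k) (aa k))" if "k < H" for k
      proof (cases "k \<le> h")
        case True
        then show ?thesis unfolding rr'_def by (simp add: some_in_eq set_pmf_not_empty)
      next
        case False
        then have "ss' k = ss k" "rr' k = rr k" unfolding ss'_def rr'_def by auto
        then show ?thesis using A HH that False by auto
      qed
      have "ss' 0 \<in> set_pmf s0" using s00 unfolding ss'_def by simp
      then have tot: "(\<Sum>k<H. rr' k) \<le> 1" using total_reward inR by blast
      have cc: "(\<Sum>k\<in>{0..<Suc h}. rr' k) + (\<Sum>k\<in>{Suc h..<H}. rr' k) = (\<Sum>k\<in>{0..<H}. rr' k)"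
        by (rule sum.atLeastLessThan_concat) (use h_layer in auto)
      have "(\<Sum>k<H. rr' k) = (\<Sum>k\<in>{0..<Suc h}. rr' k) + (\<Sum>k\<in>{Suc h..<H}. rr' k)"
        by (simp only: lessThan_atLeast0 cc)
      also have "(\<Sum>k\<in>{Suc h..<H}. rr' k) = (\<Sum>k\<in>{Suc h..<H}. rr k)"
        unfolding rr'_def by (intro sum.cong) auto
      finally have sp: "(\<Sum>k<H. rr' k) = (\<Sum>k\<in>{0..<Suc h}. rr' k) + (\<Sum>k\<in>{Suc h..<H}. rr k)" .
      have "0 \<le> (\<Sum>k\<in>{0..<Suc h}. rr' k)"
      proof (intro sum_nonneg)
        fix k assume "k \<in> {0..<Suc h}"
        then have "rr' k \<in> set_pmf (R k (ss' k) (aa k))" using inR h_layer by auto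
        then show "0 \<le> rr' k" using reward_range by force
      qed
      then show "0 + (\<Sum>l\<in>{Suc h..<Suc h + (H - Suc h)}. rr l) \<le> 1" using tot sp HH by simp
    qed
    have "0 + Vrem R M' (H - Suc h) (Suc h) x \<le> 1"
      using Vrem_le[OF reward_range] P by blast
    then have "V x \<le> 1" unfolding V_def Vopt_def by simp
    with n show ?thesis by simp
  qed

  have Dq: "measure_pmf.expectation (pair_pmf (R h s a) (trans M' h s a)) (\<lambda>(r, s'). f h s a r s')
          - measure_pmf.expectation (pair_pmf (R h s a) (trans Mstar h s a)) (\<lambda>(r, s'). f h s a r s')
          = T s a" for s a
  proof -
    define \<psi> where "\<psi> i z = (if pmf (Mstar i h s a) z \<le> pmf (M' i h s a) z then 1 else (-1::real))" for i z
    have fe: "(\<lambda>(r::real, s'). f h s a r s') = (\<lambda>x. (\<lambda>s'. \<Sum>i\<in>UNIV. \<psi> i (s' i)) (snd x))"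
      unfolding f_def g_def \<psi>_def by auto
    have ex: "measure_pmf.expectation (pair_pmf (R h s a) (trans N h s a)) (\<lambda>(r, s'). f h s a r s')
        = (\<Sum>i\<in>UNIV. measure_pmf.expectation (N i h s a) (\<psi> i))" for N
      unfolding fe
      using expectation_pair_pmf_snd[where p="R h s a" and q="trans N h s a" and f="\<lambda>s'. \<Sum>i\<in>UNIV. \<psi> i (s' i)"]
        pi_comp_sum[of N h s a \<psi>] by simp
    have L: "measure_pmf.expectation (M' i h s a) (\<psi> i) - measure_pmf.expectation (Mstar i h s a) (\<psi> i)
        = L1 (M' i h s a) (Mstar i h s a)" for i
      unfolding expfin L1_def \<psi>_def sum_subtractf[symmetric] by (intro sum.cong) auto
    show ?thesis unfolding ex T_def L[symmetric] sum_subtractf by simp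
  qed

  define \<Delta> where "\<Delta> s a =
      measure_pmf.expectation (pair_pmf (R h s a) (trans M' h s a)) (\<lambda>(r, s'). r + V s')
    - measure_pmf.expectation (pair_pmf (R h s a) (trans Mstar h s a)) (\<lambda>(r, s'). r + V s')" for s a
  have Dl: "\<Delta> s a \<le> T s a" for s a
  proof -
    have "\<Delta> s a = measure_pmf.expectation (trans M' h s a) V - measure_pmf.expectation (trans Mstar h s a) V"
      unfolding \<Delta>_def using reward_range by (simp add: pair_rV)
    also have "\<dots> \<le> T s a"
      unfolding trans_def T_def
      using pi_tv[where A=UNIV and p="\<lambda>i. M' i h s a" and q="\<lambda>i. Mstar i h s a" and dflt=undefined] Vb
      by simp
    finally show ?thesis .
  qed

  define val where "val (F :: nat \<Rightarrow> ('d \<Rightarrow> 'o) \<Rightarrow> 'a \<Rightarrow> real \<Rightarrow> ('d \<Rightarrow> 'o) \<Rightarrow> real) = measure_pmf.expectation (pair_pmf d (pmf_of_set UNIV))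
          (\<lambda>(s, a). measure_pmf.expectation (pair_pmf (R h s a) (trans M' h s a))
                        (\<lambda>(r, s'). F h s a r s')
                    - measure_pmf.expectation (pair_pmf (R h s a) (trans Mstar h s a))
                        (\<lambda>(r, s'). F h s a r s'))" for F
  have WFe: "WF R pa s0 Mstar piM M' h = (SUP F\<in>Fclass pa. val F)"
    unfolding WF_def val_def d_def ..
  have valf: "val f = measure_pmf.expectation (pair_pmf d (pmf_of_set UNIV)) (\<lambda>(s, a). T s a)"
    unfolding val_def using Dq by simp
  have bdd: "bdd_above (val ` Fclass pa)"
  proof (rule bdd_aboveI2[where M="2 * real CARD('d)"])
    fix F :: "nat \<Rightarrow> ('d \<Rightarrow> 'o) \<Rightarrow> 'a \<Rightarrow> real \<Rightarrow> ('d \<Rightarrow> 'o) \<Rightarrow> real"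
    assume "F \<in> Fclass pa"
    then obtain gg where gg: "\<forall>i. gg i \<in> Gset pa i"
      and Fe: "F = (\<lambda>h s a r s'. \<Sum>i\<in>UNIV. gg i h s a r s')" unfolding Fclass_def by blast
    have Fb: "\<bar>F h0 s a r s'\<bar> \<le> real CARD('d)" for h0 s a r s'
    proof -
      have "\<bar>F h0 s a r s'\<bar> \<le> (\<Sum>i\<in>UNIV. \<bar>gg i h0 s a r s'\<bar>)" unfolding Fe by (rule sum_abs)
      also have "\<dots> = (\<Sum>i\<in>(UNIV::'d set). 1)"
      proof (intro sum.cong refl)
        fix i
        have "gg i h0 s a r s' \<in> {-1, 1}" using gg unfolding Gset_def by blast
        then show "\<bar>gg i h0 s a r s'\<bar> = 1" by auto
      qed
      also have "\<dots> = real CARD('d)" by simp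
      finally show ?thesis .
    qed
    have Eb: "\<bar>measure_pmf.expectation (pair_pmf (R h s a) (trans N h s a)) (\<lambda>(r, s'). F h s a r s')\<bar>
              \<le> real CARD('d)" for s a and N :: "('d, 'o, 'a) model"
      by (rule exp_abs_gen) (simp add: case_prod_beta Fb)
    have "\<bar>val F\<bar> \<le> 2 * real CARD('d)"
      unfolding val_def
    proof (rule exp_abs_gen)
      fix x :: "('d \<Rightarrow> 'o) \<times> 'a"
      obtain s a where xe: "x = (s, a)" by force
      show "\<bar>(case x of (s, a) \<Rightarrow> measure_pmf.expectation (pair_pmf (R h s a) (trans M' h s a))
                        (\<lambda>(r, s'). F h s a r s')
                    - measure_pmf.expectation (pair_pmf (R h s a) (trans Mstar h s a))
                        (\<lambda>(r, s'). F h s a r s'))\<bar> \<le> 2 * real CARD('d)"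
        using Eb[of s a M'] Eb[of s a Mstar] xe by simp
    qed
    then show "val F \<le> 2 * real CARD('d)" by simp
  qed

  have Tn: "0 \<le> T s a" for s a unfolding T_def by (intro sum_nonneg L1_nonneg)
  have K: "real CARD('a) > 0" by simp
  have U: "measure_pmf.expectation (pmf_of_set (UNIV::'a set)) \<phi> = (\<Sum>a\<in>UNIV. \<phi> a) / real CARD('a)"
    for \<phi> :: "'a \<Rightarrow> real"
    by (simp add: expfin sum_divide_distrib)
  have "EB R H s0 Mstar piM M' piM' h = measure_pmf.expectation d (\<lambda>s. \<Delta> s (piM' h s))"
    unfolding EB_def \<Delta>_def d_def V_def Let_def ..
  also have "\<dots> \<le> measure_pmf.expectation d (\<lambda>s. T s (piM' h s))"
    by (rule exp_mono_fin) (rule Dl)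
  finally have EBle: "EB R H s0 Mstar piM M' piM' h \<le> measure_pmf.expectation d (\<lambda>s. T s (piM' h s))" .
  have "EB R H s0 Mstar piM M' piM' h / real CARD('a)
      \<le> measure_pmf.expectation d (\<lambda>s. T s (piM' h s)) / real CARD('a)"
    using EBle K by (simp add: divide_right_mono)
  also have "\<dots> = measure_pmf.expectation d (\<lambda>s. T s (piM' h s) / real CARD('a))"
    by (simp add: expfin sum_divide_distrib)
  also have "\<dots> \<le> measure_pmf.expectation d (\<lambda>s. (\<Sum>a\<in>UNIV. T s a) / real CARD('a))"
  proof (rule exp_mono_fin)
    fix s
    have "T s (piM' h s) \<le> (\<Sum>a\<in>UNIV. T s a)" by (rule member_le_sum) (auto simp: Tn)
    then show "T s (piM' h s) / real CARD('a) \<le> (\<Sum>a\<in>UNIV. T s a) / real CARD('a)"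
      using K by (simp add: divide_right_mono)
  qed
  also have "\<dots> = measure_pmf.expectation (pair_pmf d (pmf_of_set UNIV)) (\<lambda>(s, a). T s a)"
    by (simp add: pair_fin U)
  also have "\<dots> = val f" using valf by simp
  also have "\<dots> \<le> WF R pa s0 Mstar piM M' h"
    unfolding WFe by (rule cSUP_upper[OF fF bdd])
  finally show ?thesis .
qed

end
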